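(* Fix an integer $k\ge 1$. Let $(X_1,\dots,X_n)$ be the $\{0,1\}$-valued Markov chain with $X_1=1$ and the following transitions for $1\le \ell\le n-1$: if $X_\ell=0$ then $X_{\ell+1}=1$, and if $X_\ell=1$ then $X_{\ell+1}$ equals $0$ or $1$ with probability $1/2$ each. Let $A\in\{0,1\}^{m\times n}$ have as rows $m$ independent realizations of this chain. Then every row of $A$ is a feasible measurement for the graph $\mathcal{G}^4_n$. Moreover, there is a function $g$ depending only on $k$ such that the following holds: if $m\ge g(k)\log n$, then the probability that $A$ identifies all $k$-sparse vectors in $\mathbb{R}^n$ tends to $1$ as $n\to\infty$. One admissible choice is $g(k)=(2k+1)2^{4k^2+2k-1}/(2k-1)!$.
   Context: $\mathcal{G}^4_n$ ($n\ge 5$) is the graph on $\{1,\dots,n\}$ in which each node $i$ is adjacent to $i\pm1$ and $i\pm2 \pmod n$. A row $a\in\{0,1\}^n$ is a feasible measurement for a graph $G$ if its support $\{j:a_j=1\}$ induces a connected subgraph of $G$. A vector $x\in\mathbb{R}^n$ is $k$-sparse if it has at most $k$ nonzero entries. $A$ identifies all $k$-sparse vectors if $Ax_1\neq Ax_2$ for every two distinct $k$-sparse vectors $x_1,x_2$. *)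

theory Defs
  imports "HOL-Probability.Probability"
begin

text \<open>Nodes 1..n of the paper are represented by indices 0..n-1 (node i is index i-1);
  the cyclic adjacency is invariant under this shift.\<close>

definition G4_adj :: "nat \<Rightarrow> nat \<Rightarrow> nat \<Rightarrow> bool" where
  "G4_adj n i j \<longleftrightarrow> i < n \<and> j < n \<and> i \<noteq> j \<and>
     ((int j - int i) mod int n \<in> {1, 2, int n - 1, int n - 2})"

definition induces_connected :: "nat \<Rightarrow> nat set \<Rightarrow> bool" where
  "induces_connected n S \<longleftrightarrow>
     (\<forall>u\<in>S. \<forall>v\<in>S. (u, v) \<in> {(a, b). a \<in> S \<and> b \<in> S \<and> G4_adj n a b}\<^sup>*)"

definition row_support :: "bool list \<Rightarrow> nat set" where
  "row_support a = {j. j < length a \<and> a ! j}"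

definition feasible_measurement :: "nat \<Rightarrow> bool list \<Rightarrow> bool" where
  "feasible_measurement n a \<longleftrightarrow> length a = n \<and> induces_connected n (row_support a)"

text \<open>Remaining k states of the chain, started from current state s.\<close>
fun chain_from :: "bool \<Rightarrow> nat \<Rightarrow> bool list pmf" where
  "chain_from s 0 = return_pmf []"
| "chain_from s (Suc k) =
     do { x \<leftarrow> (if s then bernoulli_pmf (1/2) else return_pmf True);
          xs \<leftarrow> chain_from x k;
          return_pmf (x # xs) }"

definition chain_pmf :: "nat \<Rightarrow> bool list pmf" where
  "chain_pmf n = map_pmf (\<lambda>xs. True # xs) (chain_from True (n - 1))"

fun rows_pmf :: "nat \<Rightarrow> nat \<Rightarrow> bool list list pmf" where
  "rows_pmf 0 n = return_pmf []"
| "rows_pmf (Suc m) n =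
     do { r \<leftarrow> chain_pmf n; rs \<leftarrow> rows_pmf m n; return_pmf (r # rs) }"

text \<open>Vectors in R^n: functions nat => real vanishing outside {0..<n}.\<close>
definition vec_in :: "nat \<Rightarrow> (nat \<Rightarrow> real) \<Rightarrow> bool" where
  "vec_in n x \<longleftrightarrow> (\<forall>j\<ge>n. x j = 0)"

definition sparse :: "nat \<Rightarrow> (nat \<Rightarrow> real) \<Rightarrow> bool" where
  "sparse k x \<longleftrightarrow> finite {j. x j \<noteq> 0} \<and> card {j. x j \<noteq> 0} \<le> k"

definition mat_vec :: "nat \<Rightarrow> bool list list \<Rightarrow> (nat \<Rightarrow> real) \<Rightarrow> real list" where
  "mat_vec n A x = map (\<lambda>r. \<Sum>j<n. (if r ! j then 1 else 0) * x j) A"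

definition identifies_sparse :: "nat \<Rightarrow> nat \<Rightarrow> bool list list \<Rightarrow> bool" where
  "identifies_sparse n k A \<longleftrightarrow>
     (\<forall>x1 x2. vec_in n x1 \<longrightarrow> vec_in n x2 \<longrightarrow> sparse k x1 \<longrightarrow> sparse k x2 \<longrightarrow>
        x1 \<noteq> x2 \<longrightarrow> mat_vec n A x1 \<noteq> mat_vec n A x2)"

definition g_const :: "nat \<Rightarrow> real" where
  "g_const k = (2 * real k + 1) * 2 powr (4 * real k ^ 2 + 2 * real k - 1) / fact (2 * k - 1)"

end

theory Submission
  imports Defs
begin


definition sat :: "(nat \<Rightarrow> bool option) \<Rightarrow> bool list \<Rightarrow> bool" where
  "sat c xs \<longleftrightarrow> (\<forall>i<length xs. \<forall>b. c i = Some b \<longrightarrow> xs!i = b)"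

lemma sat_Nil[simp]: "sat c []" by (simp add: sat_def)

lemma sat_Cons: "sat c (x#xs) \<longleftrightarrow> (\<forall>b. c 0 = Some b \<longrightarrow> x = b) \<and> sat (\<lambda>i. c (Suc i)) xs"
  by (auto simp: sat_def nth_Cons less_Suc_eq_0_disj split: nat.splits)

lemma chain_Suc: "chain_from s (Suc len) =
   bind_pmf (if s then bernoulli_pmf (1/2) else return_pmf True) (\<lambda>x. map_pmf (Cons x) (chain_from x len))"
  by (simp add: map_pmf_def)

lemma meas_bern: "measure_pmf.prob (bind_pmf (bernoulli_pmf (1/2)) f) X =
   1/2 * measure_pmf.prob (f True) X + 1/2 * measure_pmf.prob (f False) X"
proof -
  define a where "a = measure_pmf.prob (f True) X"
  define b where "b = measure_pmf.prob (f False) X"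
  have a0: "0 \<le> a" and b0: "0 \<le> b" by (simp_all add: a_def b_def)
  have h0: "(0::real) \<le> 1/2" by simp
  have h1: "(1::real) - 1/2 = 1/2" by simp
  have "emeasure (measure_pmf (bind_pmf (bernoulli_pmf (1/2)) f)) X =
     (\<integral>\<^sup>+x. emeasure (measure_pmf (f x)) X \<partial>measure_pmf (bernoulli_pmf (1/2)))"
    by (rule emeasure_bind_pmf)
  also have "\<dots> = emeasure (measure_pmf (f True)) X * ennreal (1/2) + emeasure (measure_pmf (f False)) X * ennreal (1 - 1/2)"
    by (rule nn_integral_bernoulli_pmf) simp_all
  also have "\<dots> = ennreal a * ennreal (1/2) + ennreal b * ennreal (1/2)"
    by (simp only: a_def b_def measure_pmf.emeasure_eq_measure h1)
  also have "\<dots> = ennreal (a * (1/2) + b * (1/2))"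
    by (simp only: ennreal_mult[OF a0 h0, symmetric] ennreal_mult[OF b0 h0, symmetric]
        ennreal_plus[OF mult_nonneg_nonneg[OF a0 h0] mult_nonneg_nonneg[OF b0 h0], symmetric])
  finally have e: "emeasure (measure_pmf (bind_pmf (bernoulli_pmf (1/2)) f)) X = ennreal (a * (1/2) + b * (1/2))" .
  have "measure_pmf.prob (bind_pmf (bernoulli_pmf (1/2)) f) X = enn2real (ennreal (a * (1/2) + b * (1/2)))"
    unfolding measure_def e ..
  also have "\<dots> = a * (1/2) + b * (1/2)"
    by (rule enn2real_ennreal) (use a0 b0 in simp)
  finally show ?thesis unfolding a_def b_def by (simp only: mult.commute)
qed

lemma card_split:
  "card {i. i < Suc len \<and> c i \<noteq> None} = card {i. i < len \<and> c (Suc i) \<noteq> None} + (if c 0 \<noteq> None then 1 else 0)"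
proof -
  define Z where "Z = (if c 0 \<noteq> None then {0::nat} else {})"
  define B where "B = Suc ` {i. i < len \<and> c (Suc i) \<noteq> None}"
  have e: "{i. i < Suc len \<and> c i \<noteq> None} = Z \<union> B"
    by (auto simp: image_iff less_Suc_eq_0_disj Z_def B_def)
  have h1: "card (Z \<union> B) = card Z + card B"
    using card_Un_disjoint[of Z B] by (auto simp: Z_def B_def)
  have h2: "card B = card {i. i < len \<and> c (Suc i) \<noteq> None}"
    unfolding B_def by (rule card_image) auto
  have h3: "card Z = (if c 0 \<noteq> None then 1 else 0)" by (simp add: Z_def)
  show ?thesis by (simp only: e h1 h2 h3)
qed

lemma chain_lb:
  assumes "\<forall>i. c i = Some False \<longrightarrow> (case i of 0 \<Rightarrow> s | Suc j \<Rightarrow> c j = Some True)"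
  shows "measure_pmf.prob (chain_from s len) {xs. sat c xs} \<ge> (1/2) ^ card {i. i < len \<and> c i \<noteq> None}"
  using assms
proof (induction len arbitrary: s c)
  case 0
  then show ?case by simp
next
  case (Suc len)
  define c' where "c' = (\<lambda>i. c (Suc i))"
  define N' where "N' = card {i. i < len \<and> c' i \<noteq> None}"
  define ok where "ok = (\<lambda>x. \<forall>b. c 0 = Some b \<longrightarrow> x = b)"
  have N: "card {i. i < Suc len \<and> c i \<noteq> None} = N' + (if c 0 \<noteq> None then 1 else 0)"
    unfolding N'_def c'_def by (rule card_split)
  have P: "measure_pmf.prob (map_pmf (Cons x) (chain_from x len)) {xs. sat c xs} =
      (if ok x then measure_pmf.prob (chain_from x len) {xs. sat c' xs} else 0)" for x
  proof -
    have "(Cons x) -` {xs. sat c xs} = (if ok x then {xs. sat c' xs} else {})"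
      by (auto simp: sat_Cons ok_def c'_def)
    then show ?thesis by simp
  qed
  have IH: "ok x \<Longrightarrow> measure_pmf.prob (chain_from x len) {xs. sat c' xs} \<ge> (1/2) ^ N'" for x
  proof -
    assume okx: "ok x"
    show ?thesis unfolding N'_def
    proof (rule Suc.IH, intro allI impI)
      fix i assume ci: "c' i = Some False"
      show "case i of 0 \<Rightarrow> x | Suc j \<Rightarrow> c' j = Some True"
      proof (cases i)
        case 0
        with ci Suc.prems have "c 0 = Some True" unfolding c'_def by force
        then have "x = True" using okx unfolding ok_def by blast
        then show ?thesis using 0 by simp
      next
        case (Suc j)
        with ci Suc.prems show ?thesis unfolding c'_def by force
      qed
    qed
  qed
  have hp: "(0::real) \<le> (1/2)^N'" by simp
  show ?case
  proof (cases s)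
    case False
    have c0: "c 0 \<noteq> Some False" using Suc.prems False by force
    have okT: "ok True" using c0 unfolding ok_def by (cases "c 0") auto
    have E1: "measure_pmf.prob (chain_from s (Suc len)) {xs. sat c xs} = 
       measure_pmf.prob (chain_from True len) {xs. sat c' xs}"
      using False okT by (simp only: chain_Suc bind_return_pmf if_False P) simp
    have d: "(1/2::real) ^ (N' + (if c 0 \<noteq> None then 1 else 0)) \<le> (1/2)^N'"
      by (rule power_decreasing) auto
    show ?thesis unfolding N E1 by (rule order_trans[OF d IH[OF okT]])
  next
    case True
    define pT where "pT = (if ok True then measure_pmf.prob (chain_from True len) {xs. sat c' xs} else 0)"
    define pF where "pF = (if ok False then measure_pmf.prob (chain_from False len) {xs. sat c' xs} else 0)"
    have eq: "measure_pmf.prob (chain_from s (Suc len)) {xs. sat c xs} = 1/2 * pT + 1/2 * pF"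
      unfolding pT_def pF_def using True by (simp only: chain_Suc if_True meas_bern P)
    have pT0: "0 \<le> pT" and pF0: "0 \<le> pF" by (simp_all add: pT_def pF_def)
    have pTb: "ok True \<Longrightarrow> (1/2)^N' \<le> pT" unfolding pT_def using IH[of True] by simp
    have pFb: "ok False \<Longrightarrow> (1/2)^N' \<le> pF" unfolding pF_def using IH[of False] by simp
    show ?thesis
    proof (cases "c 0")
      case None
      then have oT: "ok True" and oF: "ok False" by (simp_all add: ok_def)
      have "(1/2::real)^N' = 1/2 * (1/2)^N' + 1/2 * (1/2)^N'" by simp
      also have "\<dots> \<le> 1/2 * pT + 1/2 * pF"
        by (intro add_mono mult_left_mono pTb[OF oT] pFb[OF oF]) simp_all
      finally show ?thesis unfolding N eq using None by simp
    next
      case (Some b)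
      show ?thesis
      proof (cases b)
        case True
        then have oT: "ok True" using Some by (simp add: ok_def)
        have "(1/2::real)^(N'+1) = 1/2 * (1/2)^N' + 1/2 * 0" by simp
        also have "\<dots> \<le> 1/2 * pT + 1/2 * pF"
          by (intro add_mono mult_left_mono pTb[OF oT] pF0) simp_all
        finally show ?thesis unfolding N eq using Some by simp
      next
        case False
        then have oF: "ok False" using Some by (simp add: ok_def)
        have "(1/2::real)^(N'+1) = 1/2 * 0 + 1/2 * (1/2)^N'" by simp
        also have "\<dots> \<le> 1/2 * pT + 1/2 * pF"
          by (intro add_mono mult_left_mono pFb[OF oF] pT0) simp_all
        finally show ?thesis unfolding N eq using Some by simp
      qed
    qed
  qed
qed



definition nc :: "bool list \<Rightarrow> bool" where
  "nc ys \<longleftrightarrow> (\<forall>i. Suc i < length ys \<longrightarrow> ys!i \<or> ys!Suc i)"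

lemma nc_single[simp]: "nc [a]" by (simp add: nc_def)

lemma nc_Cons2: "nc (a#b#ys) \<longleftrightarrow> (a \<or> b) \<and> nc (b#ys)"
  apply (simp add: nc_def)
  apply (rule iffI)
   apply (intro conjI allI impI)
    apply (drule spec[of _ 0]; simp)
   apply (drule_tac x="Suc i" in spec; simp)
  apply (intro allI impI)
  apply (case_tac i; simp)
  done

lemma chain_props: "xs \<in> set_pmf (chain_from s len) \<Longrightarrow> length xs = len \<and> nc (s#xs)"
proof (induction len arbitrary: s xs)
  case 0 then show ?case by simp
next
  case (Suc len)
  from Suc.prems obtain x xs' where x: "x \<in> set_pmf (if s then bernoulli_pmf (1/2) else return_pmf True)"
    and xs': "xs' \<in> set_pmf (chain_from x len)" and xs: "xs = x # xs'"
    by (auto simp: chain_Suc)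
  from Suc.IH[OF xs'] have "length xs' = len" "nc (x#xs')" by auto
  moreover have "s \<or> x" using x by (cases s) auto
  ultimately show ?case using xs by (simp add: nc_Cons2)
qed

lemma chain_pmf_props: "n \<ge> 1 \<Longrightarrow> r \<in> set_pmf (chain_pmf n) \<Longrightarrow> length r = n \<and> nc r \<and> r!0"
  unfolding chain_pmf_def using chain_props[of _ True "n-1"] by auto

lemma rows_props: "A \<in> set_pmf (rows_pmf m n) \<Longrightarrow> r \<in> set A \<Longrightarrow> r \<in> set_pmf (chain_pmf n)"
  by (induction m arbitrary: A) auto

lemma adj1: "n \<ge> 5 \<Longrightarrow> u + 1 < n \<Longrightarrow> G4_adj n u (u+1) \<and> G4_adj n (u+1) u"
  by (auto simp: G4_adj_def zmod_minus1)

lemma adj2: "n \<ge> 5 \<Longrightarrow> u + 2 < n \<Longrightarrow> G4_adj n u (u+2) \<and> G4_adj n (u+2) u"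
proof -
  assume "n \<ge> 5" "u + 2 < n"
  moreover have "(-2::int) mod int n = int n - 2" using \<open>n \<ge> 5\<close>
    using mod_pos_pos_trivial[of "int n - 2" "int n"] mod_add_self2[of "-2" "int n"] by simp
  ultimately show ?thesis by (auto simp: G4_adj_def)
qed

lemma feasible: assumes n: "n \<ge> 5" and r: "r \<in> set_pmf (chain_pmf n)"
  shows "feasible_measurement n r"
proof -
  from chain_pmf_props[OF _ r] n have len: "length r = n" and ncr: "nc r" by auto
  define S where "S = row_support r"
  define R where "R = {(a, b). a \<in> S \<and> b \<in> S \<and> G4_adj n a b}"
  have S: "j \<in> S \<longleftrightarrow> j < n \<and> r!j" for j by (auto simp: S_def row_support_def len)
  have main: "\<forall>u v. u \<in> S \<longrightarrow> v \<in> S \<longrightarrow> v = u + d \<longrightarrow> (u,v) \<in> R\<^sup>* \<and> (v,u) \<in> R\<^sup>*" for d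
  proof (induction d rule: less_induct)
    case (less d)
    show ?case
    proof (intro allI impI)
      fix u v assume u: "u \<in> S" and v: "v \<in> S" and vd: "v = u + d"
      show "(u,v) \<in> R\<^sup>* \<and> (v,u) \<in> R\<^sup>*"
      proof (cases "d = 0")
        case True then show ?thesis using vd by simp
      next
        case False
        have vn: "v < n" using v S[of v] by simp
        show ?thesis
        proof (cases "u + 1 \<in> S")
          case True
          have un: "u + 1 < n" using vn vd False by simp
          have e: "(u, u+1) \<in> R" "(u+1, u) \<in> R" using adj1[OF n un] True u
            by (simp_all add: R_def)
          have "d - 1 < d" "v = (u+1) + (d-1)" using False vd by simp_all
          from less.IH[rule_format, OF this(1) True v this(2)]
          have h: "(u+1, v) \<in> R\<^sup>* \<and> (v, u+1) \<in> R\<^sup>*" .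
          have "(u, v) \<in> R\<^sup>*" using converse_rtrancl_into_rtrancl[OF e(1)] h by blast
          moreover have "(v, u) \<in> R\<^sup>*" using rtrancl_into_rtrancl[OF _ e(2)] h by blast
          ultimately show ?thesis by blast
        next
          case F: False
          have "d \<noteq> 1" using F v vd by (cases "d = 1") simp_all
          with False have d2: "d \<ge> 2" by auto
          have "\<not> r!(u+1)" using F S[of "u+1"] vn vd d2 by simp
          moreover have "Suc (u+1) < length r" using len vn vd d2 by auto
          ultimately have "r!(u+2)" using ncr unfolding nc_def by (metis add_Suc_right one_add_one plus_1_eq_Suc)
          then have u2: "u + 2 \<in> S" using S[of "u+2"] vn vd d2 by simp
          have un: "u + 2 < n" using vn vd d2 by simp
          have e: "(u, u+2) \<in> R" "(u+2, u) \<in> R" using adj2[OF n un] u2 u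
            by (simp_all add: R_def)
          have "d - 2 < d" "v = (u+2) + (d-2)" using d2 vd by simp_all
          from less.IH[rule_format, OF this(1) u2 v this(2)]
          have h: "(u+2, v) \<in> R\<^sup>* \<and> (v, u+2) \<in> R\<^sup>*" .
          have "(u, v) \<in> R\<^sup>*" using converse_rtrancl_into_rtrancl[OF e(1)] h by blast
          moreover have "(v, u) \<in> R\<^sup>*" using rtrancl_into_rtrancl[OF _ e(2)] h by blast
          ultimately show ?thesis by blast
        qed
      qed
    qed
  qed
  have "induces_connected n S"
    unfolding induces_connected_def
  proof (intro ballI)
    fix u v
    assume uS: "u \<in> S" and vS: "v \<in> S"
    have "(u, v) \<in> R\<^sup>*"
    proof (cases "u \<le> v")
      case True
      then have "v = u + (v - u)" by simp
      from main[of "v - u", rule_format, OF uS vS this] show ?thesis by blast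
    next
      case False
      then have "u = v + (u - v)" by simp
      from main[of "u - v", rule_format, OF vS uS this] show ?thesis by blast
    qed
    then show "(u, v) \<in> {(a, b). a \<in> S \<and> b \<in> S \<and> G4_adj n a b}\<^sup>*"
      unfolding R_def .
  qed
  then show ?thesis using len unfolding feasible_measurement_def S_def by simp
qed

lemma rows_Suc: "rows_pmf (Suc m) n = map_pmf (\<lambda>(r, rs). r # rs) (pair_pmf (chain_pmf n) (rows_pmf m n))"
  by (simp add: pair_pmf_def map_pmf_def bind_assoc_pmf bind_return_pmf)

lemma rows_none: "measure_pmf.prob (rows_pmf m n) {A. \<forall>r\<in>set A. \<not> P r} =
   measure_pmf.prob (chain_pmf n) {r. \<not> P r} ^ m"
proof (induction m)
  case 0 then show ?case by simp
next
  case (Suc m)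
  have "(\<lambda>(r, rs). r # rs) -` {A. \<forall>r\<in>set A. \<not> P r} = {r. \<not> P r} \<times> {A. \<forall>r\<in>set A. \<not> P r}"
    by auto
  then have "measure_pmf.prob (rows_pmf (Suc m) n) {A. \<forall>r\<in>set A. \<not> P r} =
    measure_pmf.prob (pair_pmf (chain_pmf n) (rows_pmf m n)) ({r. \<not> P r} \<times> {A. \<forall>r\<in>set A. \<not> P r})"
    by (simp only: rows_Suc measure_map_pmf)
  also have "\<dots> = measure_pmf.prob (chain_pmf n) {r. \<not> P r} * measure_pmf.prob (rows_pmf m n) {A. \<forall>r\<in>set A. \<not> P r}"
    by (rule measure_pmf_prob_product) (simp_all add: countableI_type)
  finally show ?case using Suc by simp
qed



definition pc :: "nat set \<Rightarrow> nat \<Rightarrow> nat \<Rightarrow> bool option" where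
  "pc T j i = (if j \<noteq> 0 \<and> i = j then Some False
     else if i \<in> T \<or> (j \<noteq> 0 \<and> i = j - 1) then Some True else None)"

definition Idx :: "nat \<Rightarrow> nat \<Rightarrow> (nat set \<times> nat) set" where
  "Idx n k = Sigma {T. T \<subseteq> {..<n} \<and> card T \<le> 2*k} (\<lambda>T. insert 0 T)"

definition Good :: "nat \<Rightarrow> nat \<Rightarrow> bool list list \<Rightarrow> bool" where
  "Good n k A \<longleftrightarrow> (\<forall>p\<in>Idx n k. \<exists>r\<in>set A. sat (pc (fst p) (snd p)) r)"

lemma sat_at: "sat c r \<Longrightarrow> i < length r \<Longrightarrow> c i = Some b \<Longrightarrow> r!i = b"
  by (simp add: sat_def)

lemma good_ident:
  assumes G: "Good n k A" and L: "\<forall>r\<in>set A. length r = n"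
  shows "identifies_sparse n k A"
  unfolding identifies_sparse_def
proof (intro allI impI)
  fix x1 x2 assume v1: "vec_in n x1" and v2: "vec_in n x2" and s1: "sparse k x1"
    and s2: "sparse k x2" and ne: "x1 \<noteq> x2"
  show "mat_vec n A x1 \<noteq> mat_vec n A x2"
  proof
    assume eq: "mat_vec n A x1 = mat_vec n A x2"
    define d where "d = (\<lambda>j. x1 j - x2 j)"
    define T where "T = {j. d j \<noteq> 0}"
    have Tsub: "T \<subseteq> {..<n}"
    proof
      fix j assume "j \<in> T"
      then have "x1 j \<noteq> x2 j" by (simp add: T_def d_def)
      show "j \<in> {..<n}"
      proof (rule ccontr)
        assume "j \<notin> {..<n}"
        then have "j \<ge> n" by simp
        then have "x1 j = 0" "x2 j = 0" using v1 v2 by (simp_all add: vec_in_def)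
        with \<open>x1 j \<noteq> x2 j\<close> show False by simp
      qed
    qed
    have finT: "finite T" using Tsub finite_subset by blast
    have "T \<subseteq> {j. x1 j \<noteq> 0} \<union> {j. x2 j \<noteq> 0}" by (auto simp: T_def d_def)
    hence "card T \<le> card ({j. x1 j \<noteq> 0} \<union> {j. x2 j \<noteq> 0})"
      using s1 s2 by (intro card_mono) (auto simp: sparse_def)
    also have "\<dots> \<le> card {j. x1 j \<noteq> 0} + card {j. x2 j \<noteq> 0}" by (rule card_Un_le)
    also have "\<dots> \<le> 2*k" using s1 s2 by (simp add: sparse_def)
    finally have cT: "card T \<le> 2*k" .
    have zero: "(\<Sum>i\<in>T. (if r!i then 1 else 0) * d i) = 0" if rA: "r \<in> set A" for r
    proof -
      have "(\<Sum>j<n. (if r ! j then 1 else 0) * x1 j) = (\<Sum>j<n. (if r ! j then 1 else 0) * x2 j)"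
        using eq rA unfolding mat_vec_def by (simp add: map_eq_conv)
      hence "(\<Sum>j<n. (if r ! j then 1 else 0) * d j) = 0"
        by (simp add: d_def right_diff_distrib sum_subtractf)
      moreover have "(\<Sum>j<n. (if r ! j then 1 else 0) * d j) = (\<Sum>j\<in>T. (if r ! j then 1 else 0) * d j)"
        by (rule sum.mono_neutral_right) (use Tsub in \<open>auto simp: T_def\<close>)
      ultimately show ?thesis by simp
    qed
    have IT: "(T, j) \<in> Idx n k" if "j \<in> insert 0 T" for j
      using Tsub cT that by (simp add: Idx_def)
    obtain r0 where r0: "r0 \<in> set A" "sat (pc T 0) r0" using G IT[of 0] unfolding Good_def by fastforce
    have "(\<Sum>i\<in>T. (if r0!i then 1 else 0) * d i) = (\<Sum>i\<in>T. d i)"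
    proof (rule sum.cong)
      fix i assume "i \<in> T"
      then have "r0!i" using sat_at[OF r0(2), of i True] L r0(1) Tsub by (auto simp: pc_def)
      then show "(if r0!i then 1 else 0) * d i = d i" by simp
    qed simp
    with zero[OF r0(1)] have sumT: "(\<Sum>i\<in>T. d i) = 0" by simp
    obtain j0 where "x1 j0 \<noteq> x2 j0" using ne by auto
    then have j0T: "j0 \<in> T" by (simp add: T_def d_def)
    show False
    proof (cases "\<exists>j\<in>T. j \<noteq> 0")
      case True
      then obtain j where jT: "j \<in> T" and j0: "j \<noteq> 0" by blast
      obtain r where r: "r \<in> set A" "sat (pc T j) r" using G IT[of j] jT unfolding Good_def by fastforce
      have lr: "length r = n" using L r(1) by simp
      have rj: "\<not> r!j" using sat_at[OF r(2), of j False] lr Tsub jT j0 by (auto simp: pc_def)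
      have "(\<Sum>i\<in>T-{j}. (if r!i then 1 else 0) * d i) = (\<Sum>i\<in>T-{j}. d i)"
      proof (rule sum.cong)
        fix i assume "i \<in> T - {j}"
        then have "r!i" using sat_at[OF r(2), of i True] lr Tsub by (auto simp: pc_def)
        then show "(if r!i then 1 else 0) * d i = d i" by simp
      qed simp
      moreover have "(\<Sum>i\<in>T. (if r!i then 1 else 0) * d i) = (if r!j then 1 else 0) * d j + (\<Sum>i\<in>T-{j}. (if r!i then 1 else 0) * d i)"
        by (rule sum.remove[OF finT jT])
      moreover have "(\<Sum>i\<in>T. d i) = d j + (\<Sum>i\<in>T-{j}. d i)"
        by (rule sum.remove[OF finT jT])
      ultimately have "d j = 0" using zero[OF r(1)] sumT rj by simp
      then show False using jT by (simp add: T_def)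
    next
      case False
      then have "T = {0}" using j0T by auto
      then have "(\<Sum>i\<in>T. d i) = d 0" by simp
      with sumT have "d 0 = 0" by simp
      moreover have "0 \<in> T" using \<open>T = {0}\<close> by simp
      ultimately show False by (simp add: T_def)
    qed
  qed
qed

lemma chain_pmf_lb:
  assumes n: "n \<ge> 1" and c0: "c 0 \<noteq> Some False" and cs: "\<forall>i. c (Suc i) = Some False \<longrightarrow> c i = Some True"
  shows "measure_pmf.prob (chain_pmf n) {r. sat c r} \<ge> (1/2) ^ card {i. i < n \<and> c i \<noteq> None}"
proof -
  have v: "(Cons True) -` {r. sat c r} = {xs. sat (\<lambda>i. c (Suc i)) xs}"
    using c0 by (auto simp: sat_Cons)
  have eq: "measure_pmf.prob (chain_pmf n) {r. sat c r} = measure_pmf.prob (chain_from True (n-1)) {xs. sat (\<lambda>i. c (Suc i)) xs}"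
    unfolding chain_pmf_def measure_map_pmf v ..
  have lb: "measure_pmf.prob (chain_from True (n-1)) {xs. sat (\<lambda>i. c (Suc i)) xs} \<ge>
     (1/2) ^ card {i. i < n-1 \<and> c (Suc i) \<noteq> None}"
    by (rule chain_lb) (use cs in \<open>auto split: nat.split\<close>)
  have "card {i. i < n-1 \<and> c (Suc i) \<noteq> None} \<le> card {i. i < n \<and> c i \<noteq> None}"
  proof -
    have "card {i. i < n-1 \<and> c (Suc i) \<noteq> None} = card (Suc ` {i. i < n-1 \<and> c (Suc i) \<noteq> None})"
      by (rule card_image[symmetric]) auto
    also have "\<dots> \<le> card {i. i < n \<and> c i \<noteq> None}"
      by (rule card_mono) auto
    finally show ?thesis .
  qed
  then have dec: "(1/2::real) ^ card {i. i < n \<and> c i \<noteq> None} \<le> (1/2) ^ card {i. i < n-1 \<and> c (Suc i) \<noteq> None}"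
    by (rule power_decreasing) auto
  show ?thesis unfolding eq by (rule order_trans[OF dec lb])
qed

lemma pat_lb:
  assumes n: "n \<ge> 1" and p: "(T, j) \<in> Idx n k"
  shows "measure_pmf.prob (chain_pmf n) {r. sat (pc T j) r} \<ge> (1/2) ^ (2*k+1)"
proof -
  from p have Tsub: "T \<subseteq> {..<n}" and cT: "card T \<le> 2*k" and j: "j \<in> insert 0 T"
    by (auto simp: Idx_def)
  have finT: "finite T" using Tsub finite_subset by blast
  have "{i. i < n \<and> pc T j i \<noteq> None} \<subseteq> insert (j - 1) T"
    using j by (auto simp: pc_def split: if_splits)
  then have "card {i. i < n \<and> pc T j i \<noteq> None} \<le> card (insert (j - 1) T)"
    using finT by (intro card_mono) auto
  also have "\<dots> \<le> 2*k+1" using card_insert_le_m1[of "card T + 1" T] finT cT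
    by (metis Suc_eq_plus1 add_le_mono1 card_insert_if le_SucI)
  finally have cc: "card {i. i < n \<and> pc T j i \<noteq> None} \<le> 2*k+1" .
  have lb: "measure_pmf.prob (chain_pmf n) {r. sat (pc T j) r} \<ge> (1/2) ^ card {i. i < n \<and> pc T j i \<noteq> None}"
    by (rule chain_pmf_lb[OF n]) (auto simp: pc_def)
  have dec: "(1/2::real) ^ (2*k+1) \<le> (1/2) ^ card {i. i < n \<and> pc T j i \<noteq> None}"
    by (rule power_decreasing[OF cc]) auto
  show ?thesis by (rule order_trans[OF dec lb])
qed

lemma finite_Idx: "finite (Idx n k)"
proof -
  have "Idx n k \<subseteq> Pow {..<n} \<times> {..n}" by (auto simp: Idx_def)
  then show ?thesis by (rule finite_subset) auto
qed

lemma card_Idx: assumes n: "n \<ge> 1" shows "real (card (Idx n k)) \<le> real ((2*k+1)*(2*k+1)) * real n ^ (2*k)"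
proof -
  define S where "S = {T. T \<subseteq> {..<n} \<and> card T \<le> 2*k}"
  have finS: "finite S" unfolding S_def by (rule finite_subset[of _ "Pow {..<n}"]) auto
  have "card (Idx n k) = (\<Sum>T\<in>S. card (insert 0 T))"
    unfolding Idx_def S_def[symmetric]
    by (rule card_SigmaI[OF finS]) (auto simp: S_def intro: finite_subset)
  also have "\<dots> \<le> (\<Sum>T\<in>S. 2*k+1)"
  proof (rule sum_mono)
    fix T assume "T \<in> S"
    then have "finite T" "card T \<le> 2*k" by (auto simp: S_def intro: finite_subset)
    then show "card (insert 0 T) \<le> 2*k+1" by (simp add: card_insert_if)
  qed
  also have "\<dots> = card S * (2*k+1)" by simp
  finally have c1: "card (Idx n k) \<le> card S * (2*k+1)" .
  have "S = (\<Union>i\<in>{..2*k}. {T. T \<subseteq> {..<n} \<and> card T = i})" by (auto simp: S_def)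
  then have "card S \<le> (\<Sum>i\<in>{..2*k}. card {T. T \<subseteq> {..<n} \<and> card T = i})"
    by (simp add: card_UN_le)
  also have "\<dots> \<le> (\<Sum>i\<in>{..2*k}. n ^ (2*k))"
  proof (rule sum_mono)
    fix i assume i: "i \<in> {..2*k}"
    have "card {T. T \<subseteq> {..<n} \<and> card T = i} = n choose i"
      using n_subsets[of "{..<n}" i] by simp
    also have "\<dots> \<le> n ^ i"
    proof (cases "i \<le> n")
      case True then show ?thesis by (rule binomial_le_pow)
    next
      case False then show ?thesis by (simp add: binomial_eq_0)
    qed
    also have "\<dots> \<le> n ^ (2*k)" using i n by (intro power_increasing) auto
    finally show "card {T. T \<subseteq> {..<n} \<and> card T = i} \<le> n ^ (2*k)" .
  qed
  also have "\<dots> = (2*k+1) * n^(2*k)" by (simp only: sum_constant card_atMost) simp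
  finally have c2: "card S \<le> (2*k+1) * n^(2*k)" .
  have "card (Idx n k) \<le> (2*k+1) * n^(2*k) * (2*k+1)"
    by (rule order_trans[OF c1 mult_le_mono1[OF c2]])
  then have "real (card (Idx n k)) \<le> real ((2*k+1) * n^(2*k) * (2*k+1))" by (simp only: of_nat_le_iff)
  also have "real ((2*k+1) * n^(2*k) * (2*k+1)) = real ((2*k+1)*(2*k+1)) * real n ^ (2*k)"
    by (simp only: of_nat_mult of_nat_power mult_ac)
  finally show ?thesis .
qed

lemma fail_bound:
  assumes n: "n \<ge> 1"
  shows "measure_pmf.prob (rows_pmf m n) {A. \<not> Good n k A} \<le> real (card (Idx n k)) * (1 - (1/2)^(2*k+1)) ^ m"
proof -
  have eq: "{A. \<not> Good n k A} = (\<Union>p\<in>Idx n k. {A. \<forall>r\<in>set A. \<not> sat (pc (fst p) (snd p)) r})"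
    by (auto simp: Good_def)
  have "measure_pmf.prob (rows_pmf m n) {A. \<not> Good n k A} \<le>
      (\<Sum>p\<in>Idx n k. measure_pmf.prob (rows_pmf m n) {A. \<forall>r\<in>set A. \<not> sat (pc (fst p) (snd p)) r})"
    unfolding eq by (rule measure_pmf.finite_measure_subadditive_finite) (auto simp: finite_Idx)
  also have "\<dots> \<le> (\<Sum>p\<in>Idx n k. (1 - (1/2)^(2*k+1)) ^ m)"
  proof (rule sum_mono)
    fix p assume p: "p \<in> Idx n k"
    obtain T j where pTj: "p = (T, j)" by (cases p)
    have lb: "measure_pmf.prob (chain_pmf n) {r. sat (pc T j) r} \<ge> (1/2)^(2*k+1)"
      using pat_lb[OF n] p pTj by simp
    have "measure_pmf.prob (chain_pmf n) {r. \<not> sat (pc T j) r} = 1 - measure_pmf.prob (chain_pmf n) {r. sat (pc T j) r}"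
      using measure_pmf.prob_compl[of "{r. sat (pc T j) r}" "chain_pmf n"]
      by (simp add: Compl_eq_Diff_UNIV[symmetric] Collect_neg_eq)
    then have "measure_pmf.prob (chain_pmf n) {r. \<not> sat (pc T j) r} \<le> 1 - (1/2)^(2*k+1)"
      using lb by linarith
    then have "measure_pmf.prob (chain_pmf n) {r. \<not> sat (pc T j) r} ^ m \<le> (1 - (1/2)^(2*k+1)) ^ m"
      by (intro power_mono) auto
    then show "measure_pmf.prob (rows_pmf m n) {A. \<forall>r\<in>set A. \<not> sat (pc (fst p) (snd p)) r} \<le> (1 - (1/2)^(2*k+1)) ^ m"
      by (simp add: pTj rows_none)
  qed
  also have "\<dots> = real (card (Idx n k)) * (1 - (1/2)^(2*k+1)) ^ m" by (rule sum_constant)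
  finally show ?thesis .
qed



lemma ident_lb:
  assumes n: "n \<ge> 1"
  shows "measure_pmf.prob (rows_pmf m n) {A. identifies_sparse n k A} \<ge> 1 - real (card (Idx n k)) * (1 - (1/2)^(2*k+1)) ^ m"
proof -
  have sub: "{A. Good n k A} \<inter> set_pmf (rows_pmf m n) \<subseteq> {A. identifies_sparse n k A}"
  proof
    fix A assume "A \<in> {A. Good n k A} \<inter> set_pmf (rows_pmf m n)"
    then have G: "Good n k A" and As: "A \<in> set_pmf (rows_pmf m n)" by auto
    have "\<forall>r\<in>set A. length r = n" using chain_pmf_props[OF n] rows_props[OF As] by blast
    then show "A \<in> {A. identifies_sparse n k A}" using good_ident[OF G] by simp
  qed
  have "measure_pmf.prob (rows_pmf m n) {A. Good n k A} = measure_pmf.prob (rows_pmf m n) ({A. Good n k A} \<inter> set_pmf (rows_pmf m n))"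
    by (rule measure_Int_set_pmf[symmetric])
  also have "\<dots> \<le> measure_pmf.prob (rows_pmf m n) {A. identifies_sparse n k A}"
    by (rule measure_pmf.finite_measure_mono[OF sub]) simp
  finally have g: "measure_pmf.prob (rows_pmf m n) {A. Good n k A} \<le> measure_pmf.prob (rows_pmf m n) {A. identifies_sparse n k A}" .
  have sp: "space (measure_pmf (rows_pmf m n)) - {A. \<not> Good n k A} = {A. Good n k A}" by auto
  have "measure_pmf.prob (rows_pmf m n) {A. Good n k A} = 1 - measure_pmf.prob (rows_pmf m n) {A. \<not> Good n k A}"
    using measure_pmf.prob_compl[of "{A. \<not> Good n k A}" "rows_pmf m n"] unfolding sp by simp
  with fail_bound[OF n, of m k] g show ?thesis by linarith
qed

lemma exp_bound:
  fixes q c :: real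
  assumes q: "0 < q" "q \<le> 1" and n: "n \<ge> 1" and mc: "real m \<ge> c * ln (real n)"
  shows "(1 - q) ^ m \<le> real n powr (- q * c)"
proof -
  have "(1 - q) ^ m \<le> exp (-q) ^ m"
    using q exp_ge_add_one_self[of "-q"] by (intro power_mono) auto
  also have "\<dots> = exp (real m * (-q))" by (rule exp_of_nat_mult[symmetric])
  also have "\<dots> \<le> exp (c * ln (real n) * (-q))"
    using mc q by (intro exp_mono mult_right_mono_neg) auto
  also have "\<dots> = real n powr (- q * c)"
    using n by (simp add: powr_def mult_ac)
  finally show ?thesis .
qed

lemma main_limit:
  fixes c :: real and m :: "nat \<Rightarrow> nat"
  assumes qc: "(1/2)^(2*k+1) * c > real (2*k)" and m: "\<forall>n. real (m n) \<ge> c * ln (real n)"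
  shows "(\<lambda>n. measure_pmf.prob (rows_pmf (m n) n) {A. identifies_sparse n k A}) \<longlonglongrightarrow> 1"
proof -
  define q :: real where "q = (1/2)^(2*k+1)"
  define C :: real where "C = real ((2*k+1)*(2*k+1))"
  define e where "e = real (2*k) - q*c"
  have e: "e < 0" using qc by (simp add: e_def q_def)
  have q1: "0 < q" unfolding q_def by simp
  have q2: "q \<le> 1" unfolding q_def by (rule power_le_one) simp_all
  note q = q1 q2
  have low: "1 - C * real n powr e \<le> measure_pmf.prob (rows_pmf (m n) n) {A. identifies_sparse n k A}"
    if n: "n \<ge> 1" for n
  proof -
    have nn: "0 \<le> (1 - q) ^ m n" using q by simp
    have A: "real (card (Idx n k)) * (1 - q) ^ (m n) \<le> (C * real n ^ (2*k)) * real n powr (- q * c)"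
      using card_Idx[OF n, of k] exp_bound[OF q n m[rule_format, of n]] nn
      by (intro mult_mono) (auto simp: C_def)
    have np: "0 < real n" using n by simp
    have "real n ^ (2*k) = real n powr real (2*k)" by (rule powr_realpow[OF np, symmetric])
    then have "real n ^ (2*k) * real n powr (- q * c) = real n powr (real (2*k) + (- q * c))"
      by (simp only: powr_add)
    also have "real (2*k) + (- q * c) = e" by (simp add: e_def)
    finally have B: "real n ^ (2*k) * real n powr (- q * c) = real n powr e" .
    have "real (card (Idx n k)) * (1 - q) ^ (m n) \<le> C * real n powr e"
      using A unfolding mult.assoc B .
    with ident_lb[OF n, where m="m n" and k=k] show ?thesis unfolding q_def by linarith
  qed
  have "(\<lambda>n. real n powr e) \<longlonglongrightarrow> 0"
    by (rule tendsto_neg_powr[OF e filterlim_real_sequentially])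
  then have "(\<lambda>n. 1 - C * real n powr e) \<longlonglongrightarrow> 1 - C * 0"
    by (intro tendsto_diff tendsto_mult tendsto_const)
  then have lim: "(\<lambda>n. 1 - C * real n powr e) \<longlonglongrightarrow> 1" by simp
  have ev1: "eventually (\<lambda>n. 1 - C * real n powr e \<le> measure_pmf.prob (rows_pmf (m n) n) {A. identifies_sparse n k A}) sequentially"
    by (rule eventually_sequentiallyI[of 1]) (rule low)
  have ev2: "eventually (\<lambda>n. measure_pmf.prob (rows_pmf (m n) n) {A. identifies_sparse n k A} \<le> 1) sequentially"
    by (rule always_eventually) simp
  show ?thesis by (rule tendsto_sandwich[OF ev1 ev2 lim tendsto_const])
qed

lemma two_pow: "K \<ge> 1 \<Longrightarrow> K \<le> (2::nat) ^ (K - 1)"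
proof (induction K)
  case 0 then show ?case by simp
next
  case (Suc K)
  show ?case
  proof (cases "K = 0")
    case True then show ?thesis by simp
  next
    case False
    then have "K \<le> 2 ^ (K - 1)" using Suc.IH by simp
    moreover have "2 ^ (Suc K - 1) = 2 * (2::nat) ^ (K - 1)" using False
      by (metis Suc_diff_1 diff_Suc_1 not_gr_zero power_Suc)
    ultimately show ?thesis using False by simp
  qed
qed

lemma gconst:
  assumes k: "k \<ge> 1"
  shows "(1/2)^(2*k+1) * g_const k > real (2*k)"
proof -
  obtain j where kj: "k = Suc j" using k by (cases k) auto
  define E where "E = 4*k^2+2*k-1"
  have p: "(2::real) powr (4 * real k ^ 2 + 2 * real k - 1) = 2 ^ E"
  proof -
    have "4 * real k ^ 2 + 2 * real k - 1 = real E" unfolding E_def using k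
      by (simp add: of_nat_diff)
    then show ?thesis by (simp add: powr_realpow)
  qed
  have f1: "fact (2*k) \<le> (2*k::nat)^(2*k)" using fact_le_power[where 'a=nat, of "2*k"] by simp
  have f2: "(2*k)^(2*k) \<le> ((2::nat)^(2*k-1))^(2*k)"
    using two_pow[of "2*k"] k by (intro power_mono) auto
  have ex: "(2*k-1)*(2*k) + (2*k+1) = 4*k^2+1" unfolding kj by (simp add: power2_eq_square algebra_simps)
  have f3: "((2::nat)^(2*k-1))^(2*k) * 2^(2*k+1) = 2^(4*k^2+1)"
    by (simp only: power_mult[symmetric] power_add[symmetric] ex)
  have "fact (2*k) * 2^(2*k+1) \<le> ((2::nat)^(2*k-1))^(2*k) * 2^(2*k+1)"
    using f1 f2 by simp
  also have "\<dots> = 2^(4*k^2+1)" by (rule f3)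
  also have "\<dots> \<le> 2^E" unfolding E_def using k by (intro power_increasing) auto
  also have "\<dots> < (2*k+1) * 2^E" using k by simp
  finally have key: "fact (2*k) * 2^(2*k+1) < (2*k+1) * (2::nat)^E" .
  have fe: "fact (2*k) = (2*k) * fact (2*k-1)"
    unfolding kj by (simp add: fact_Suc)
  have "real (fact (2*k) * 2^(2*k+1)) < real ((2*k+1) * 2^E)" using key by (simp only: of_nat_less_iff)
  then have key2: "real (2*k) * (fact (2*k-1) * 2^(2*k+1)) < real (2*k+1) * 2^E"
    unfolding fe by (simp add: algebra_simps)
  have pos: "(0::real) < fact (2*k-1) * 2^(2*k+1)" by simp
  have "(1/2)^(2*k+1) * g_const k = (real (2*k+1) * 2^E) / (fact (2*k-1) * 2^(2*k+1))"
    unfolding g_const_def p by (simp add: power_one_over field_simps)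
  then show ?thesis using key2 pos by (simp add: pos_less_divide_eq)
qed


theorem theorem3:
  fixes k :: nat
  assumes "k \<ge> 1"
  shows "(\<forall>n m. n \<ge> 5 \<longrightarrow> (\<forall>A\<in>set_pmf (rows_pmf m n). \<forall>r\<in>set A. feasible_measurement n r))
    \<and> (\<exists>g :: nat \<Rightarrow> real.
         (\<forall>m :: nat \<Rightarrow> nat. (\<forall>n. real (m n) \<ge> g k * ln (real n)) \<longrightarrow>
            ((\<lambda>n. measure_pmf.prob (rows_pmf (m n) n) {A. identifies_sparse n k A}) \<longlonglongrightarrow> 1)))
    \<and> (\<forall>m :: nat \<Rightarrow> nat. (\<forall>n. real (m n) \<ge> g_const k * ln (real n)) \<longrightarrow>
            ((\<lambda>n. measure_pmf.prob (rows_pmf (m n) n) {A. identifies_sparse n k A}) \<longlonglongrightarrow> 1))"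
proof -
  have P1: "\<forall>n m. n \<ge> 5 \<longrightarrow> (\<forall>A\<in>set_pmf (rows_pmf m n). \<forall>r\<in>set A. feasible_measurement n r)"
    using feasible rows_props by blast
  have P3: "\<forall>m :: nat \<Rightarrow> nat. (\<forall>n. real (m n) \<ge> g_const k * ln (real n)) \<longrightarrow>
            ((\<lambda>n. measure_pmf.prob (rows_pmf (m n) n) {A. identifies_sparse n k A}) \<longlonglongrightarrow> 1)"
  proof (intro allI impI)
    fix m :: "nat \<Rightarrow> nat"
    assume "\<forall>n. real (m n) \<ge> g_const k * ln (real n)"
    then show "(\<lambda>n. measure_pmf.prob (rows_pmf (m n) n) {A. identifies_sparse n k A}) \<longlonglongrightarrow> 1"
      by (rule main_limit[OF gconst[OF assms]])
  qed
  have P2: "\<exists>g :: nat \<Rightarrow> real.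
         (\<forall>m :: nat \<Rightarrow> nat. (\<forall>n. real (m n) \<ge> g k * ln (real n)) \<longrightarrow>
            ((\<lambda>n. measure_pmf.prob (rows_pmf (m n) n) {A. identifies_sparse n k A}) \<longlonglongrightarrow> 1))"
    by (rule exI[of _ "\<lambda>_. g_const k"]) (use P3 in simp)
  show ?thesis using P1 P2 P3 by blast
qed

end
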